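(* Let $w,k$ be positive integers and let $x$ be an integer with $2\le x\le p^k-1$. Let $N$ be the least period of the sequence $(T_n^i(x)\bmod p^w)_{i\ge0}$ and let $M=\max\{t\ge 0 : T_n^N(x)\equiv x\pmod{p^t}\}$. If $k>M$, then the least period of the sequence $(T_n^i(x)\bmod p^k)_{i\ge 0}$ is larger than $N$.
   Context: $p$ is a prime with $p>3$ and $n>1$ is an integer with $\gcd(n,p)=\gcd(n,p^2-1)=1$ (so $T_n$ induces a permutation of $\mathbb{Z}_{p^j}$ for every $j\ge1$). $T_n(x)\in\mathbb{Z}[x]$ is the Chebyshev polynomial of the first kind: $T_0=1$, $T_1=x$, $T_d=2xT_{d-1}-T_{d-2}$. $T_n^i$ is the $i$-fold composition of $T_n$ with itself ($T_n^0(x)=x$), evaluated over $\mathbb{Z}$; it equals $T_{n^i}$. The least period of $(T_n^i(x)\bmod p^j)_{i\ge0}$ is the least positive integer $N$ with $T_n^N(x)\equiv x\pmod{p^j}$. *)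

theory Defs
  imports "HOL-Computational_Algebra.Primes" "HOL-Number_Theory.Cong"
begin

fun cheb :: "nat \<Rightarrow> int \<Rightarrow> int" where
  "cheb 0 x = 1"
| "cheb (Suc 0) x = x"
| "cheb (Suc (Suc d)) x = 2 * x * cheb (Suc d) x - cheb d x"

definition least_period :: "nat \<Rightarrow> int \<Rightarrow> int \<Rightarrow> nat" where
  "least_period n m x = (LEAST N. N > 0 \<and> [(cheb n ^^ N) x = x] (mod m))"

end

theory Submission
  imports Defs "HOL-Computational_Algebra.Polynomial" "HOL-Number_Theory.Number_Theory"
begin


lemma frob2:
  fixes a b :: "'a::comm_ring_1"
  assumes q: "prime (q::nat)"
  shows "\<exists>C. (a+b)^q = a^q + b^q + of_nat q * C"
proof -
  obtain r where r: "q = Suc r" using q by (cases q) auto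
  define g where "g k = of_nat (q choose k) * a^k * b^(q-k)" for k
  have "(a+b)^q = (\<Sum>k\<le>q. g k)" unfolding g_def by (rule binomial_ring)
  also have "\<dots> = (\<Sum>k\<le>r. g k) + g q" using r by simp
  also have "(\<Sum>k\<le>r. g k) = g 0 + (\<Sum>k<r. g (Suc k))" by (rule sum.atMost_shift)
  finally have e: "(a+b)^q = g 0 + g q + (\<Sum>k<r. g (Suc k))" by (simp add: algebra_simps)
  have "g (Suc k) = of_nat q * (of_nat ((q choose Suc k) div q) * a^(Suc k) * b^(q - Suc k))"
    if "k < r" for k
  proof -
    have "q dvd (q choose Suc k)" using dvd_choose_prime[of "Suc k" q] that r q by auto
    then have "(q choose Suc k) = q * ((q choose Suc k) div q)" by simp
    then have "(of_nat (q choose Suc k)::'a) = of_nat q * of_nat ((q choose Suc k) div q)"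
      by (metis of_nat_mult)
    then show ?thesis unfolding g_def by (simp add: mult.assoc)
  qed
  then have "(\<Sum>k<r. g (Suc k)) = of_nat q * (\<Sum>k<r. of_nat ((q choose Suc k) div q) * a^(Suc k) * b^(q - Suc k))"
    by (simp add: sum_distrib_left)
  moreover have "g 0 = b^q" "g q = a^q" unfolding g_def by auto
  ultimately show ?thesis using e by (metis add.commute)
qed

lemma binom_sq:
  fixes v :: "'a::comm_ring_1"
  shows "\<exists>g. (1+v)^k = 1 + of_nat k * v + v^2 * g"
proof (induction k)
  case 0 then show ?case by (auto intro: exI[of _ 0])
next
  case (Suc k)
  then obtain g where g: "(1+v)^k = 1 + of_nat k * v + v^2 * g" by blast
  have "(1+v)^Suc k = 1 + of_nat (Suc k) * v + v^2 * (of_nat k + g * (1 + v))"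
    using g by (simp add: algebra_simps power2_eq_square)
  then show ?case by blast
qed

lemma fermat_int:
  fixes c p :: int
  assumes "prime p" "p > 2"
  shows "[c ^ nat p = c] (mod p)"
proof -
  have q: "prime (nat p)" using assms(1) by simp
  have pos: "\<And>m::nat. [int m ^ nat p = int m] (mod p)"
  proof -
    fix m :: nat
    show "[int m ^ nat p = int m] (mod p)"
    proof (induction m)
      case 0 then show ?case using assms by (simp add: power_0_left)
    next
      case (Suc m)
      obtain C where C: "(int m + 1)^nat p = int m ^ nat p + 1 ^ nat p + of_nat (nat p) * C"
        using frob2[OF q] by blast
      have "[int m ^ nat p + 1 ^ nat p + of_nat (nat p) * C = int m + 1] (mod p)"
      proof -
        have "of_nat (nat p) = p" using assms by simp
        then have "[of_nat (nat p) * C = 0] (mod p)" unfolding cong_0_iff by simp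
        then show ?thesis using Suc by (metis add.right_neutral cong_add power_one cong_refl)
      qed
      then show ?case using C by (simp add: add.commute)
    qed
  qed
  show ?thesis
  proof (cases "c \<ge> 0")
    case True then show ?thesis using pos[of "nat c"] by simp
  next
    case False
    have odd: "odd (nat p)" using prime_odd_int[OF assms] assms by (simp add: even_nat_iff)
    have "[int (nat (-c)) ^ nat p = int (nat (-c))] (mod p)" by (rule pos)
    then have "[(-c) ^ nat p = -c] (mod p)" using False by simp
    then have "[- ((-c) ^ nat p) = - (-c)] (mod p)" by (rule cong_minus_minus_iff[THEN iffD2])
    then show ?thesis using odd by (simp add: power_minus_odd)
  qed
qed

definition tt :: "int poly" where "tt = [:0,1:]"
definition ff :: "int \<Rightarrow> int poly" where "ff x = tt^2 - of_int (2*x) * tt + 1"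
definition cg :: "int \<Rightarrow> int \<Rightarrow> int poly \<Rightarrow> int poly \<Rightarrow> bool" where
  "cg x M P Q \<longleftrightarrow> (\<exists>A B. P - Q = of_int M * A + ff x * B)"

lemma cg_refl[simp]: "cg x M P P"
  unfolding cg_def by (rule exI[of _ 0], rule exI[of _ 0]) simp

lemma cg_sym: "cg x M P Q \<Longrightarrow> cg x M Q P"
  unfolding cg_def
proof (elim exE)
  fix A B assume "P - Q = of_int M * A + ff x * B"
  then have "Q - P = of_int M * (-A) + ff x * (-B)" by (simp add: algebra_simps)
  then show "\<exists>A B. Q - P = of_int M * A + ff x * B" by blast
qed

lemma cg_trans: "cg x M P Q \<Longrightarrow> cg x M Q R \<Longrightarrow> cg x M P R"
  unfolding cg_def
proof (elim exE)
  fix A B A' B' assume "P - Q = of_int M * A + ff x * B" "Q - R = of_int M * A' + ff x * B'"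
  then have "P - R = of_int M * (A + A') + ff x * (B + B')" by (simp add: algebra_simps)
  then show "\<exists>A B. P - R = of_int M * A + ff x * B" by blast
qed

lemma cg_add: "cg x M P Q \<Longrightarrow> cg x M P' Q' \<Longrightarrow> cg x M (P + P') (Q + Q')"
  unfolding cg_def
proof (elim exE)
  fix A B A' B' assume "P - Q = of_int M * A + ff x * B" "P' - Q' = of_int M * A' + ff x * B'"
  then have "(P + P') - (Q + Q') = of_int M * (A + A') + ff x * (B + B')" by (simp add: algebra_simps)
  then show "\<exists>A B. (P + P') - (Q + Q') = of_int M * A + ff x * B" by blast
qed

lemma cg_uminus: "cg x M P Q \<Longrightarrow> cg x M (- P) (- Q)"
  unfolding cg_def
proof (elim exE)
  fix A B assume "P - Q = of_int M * A + ff x * B"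
  then have "(-P) - (-Q) = of_int M * (-A) + ff x * (-B)" by (simp add: algebra_simps)
  then show "\<exists>A B. (-P) - (-Q) = of_int M * A + ff x * B" by blast
qed

lemma cg_diff: "cg x M P Q \<Longrightarrow> cg x M P' Q' \<Longrightarrow> cg x M (P - P') (Q - Q')"
  using cg_add[of x M P Q "-P'" "-Q'"] cg_uminus[of x M P' Q'] by simp

lemma cg_mult_left: "cg x M P Q \<Longrightarrow> cg x M (R * P) (R * Q)"
  unfolding cg_def
proof (elim exE)
  fix A B assume "P - Q = of_int M * A + ff x * B"
  then have "R * P - R * Q = of_int M * (R * A) + ff x * (R * B)"
    by (metis (no_types, lifting) distrib_left mult.left_commute right_diff_distrib)
  then show "\<exists>A B. R * P - R * Q = of_int M * A + ff x * B" by blast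
qed

lemma cg_mult: "cg x M P Q \<Longrightarrow> cg x M P' Q' \<Longrightarrow> cg x M (P * P') (Q * Q')"
  by (metis cg_mult_left cg_trans mult.commute)

lemma cg_power: "cg x M P Q \<Longrightarrow> cg x M (P ^ m) (Q ^ m)"
  by (induction m) (auto intro: cg_mult)

lemma cg_ff: "cg x M (ff x) 0"
  unfolding cg_def by (rule exI[of _ 0], rule exI[of _ 1]) simp

lemma cg_Mmult: "cg x M (of_int M * A) 0"
  unfolding cg_def by (rule exI[of _ A], rule exI[of _ 0]) simp

lemma cg_dvd: "M' dvd M \<Longrightarrow> cg x M P Q \<Longrightarrow> cg x M' P Q"
  unfolding cg_def
proof (elim exE dvdE)
  fix A B k assume "P - Q = of_int M * A + ff x * B" "M = M' * k"
  then have "P - Q = of_int M' * (of_int k * A) + ff x * B" by (simp add: mult.assoc)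
  then show "\<exists>A B. P - Q = of_int M' * A + ff x * B" by blast
qed

lemma cg_int: "[c = d] (mod M) \<Longrightarrow> cg x M (of_int c) (of_int d)"
proof -
  assume "[c = d] (mod M)"
  then obtain k where "c - d = M * k" by (metis cong_iff_dvd_diff dvdE)
  then have "of_int c - of_int d = (of_int M * of_int k :: int poly)"
    by (metis of_int_diff of_int_mult)
  then show ?thesis using cg_Mmult[of x M "of_int k"] unfolding cg_def by simp
qed

lemma cg_mult0: "cg x M1 P 0 \<Longrightarrow> cg x M2 Q 0 \<Longrightarrow> cg x (M1 * M2) (P * Q) 0"
  unfolding cg_def
proof (elim exE)
  fix A B A' B' assume "P - 0 = of_int M1 * A + ff x * B" "Q - 0 = of_int M2 * A' + ff x * B'"
  then have "P * Q - 0 = of_int (M1 * M2) * (A * A') + ff x * (B * (of_int M2 * A') + of_int M1 * A * B' + ff x * B * B')"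
    by (simp add: algebra_simps)
  then show "\<exists>A B. P * Q - 0 = of_int (M1 * M2) * A + ff x * B" by blast
qed

lemma coeff_ff_mult:
  "Polynomial.coeff (ff x * B) 0 = Polynomial.coeff B 0"
  "Polynomial.coeff (ff x * B) (Suc (Suc i)) = Polynomial.coeff B i - 2 * x * Polynomial.coeff B (Suc i) + Polynomial.coeff B (Suc (Suc i))"
  unfolding ff_def tt_def by (simp_all add: power2_eq_square algebra_simps coeff_pCons of_int_poly)

lemma cg_const:
  assumes "cg x M (of_int c) 0" shows "M dvd c"
proof -
  obtain A B where e: "of_int c = of_int M * A + ff x * B" using assms unfolding cg_def by auto
  have hi: "M dvd (Polynomial.coeff B i - 2 * x * Polynomial.coeff B (Suc i) + Polynomial.coeff B (Suc (Suc i)))" for i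
  proof -
    have "Polynomial.coeff (of_int c :: int poly) (Suc (Suc i)) = Polynomial.coeff (of_int M * A + ff x * B) (Suc (Suc i))"
      using e by simp
    then have "Polynomial.coeff (ff x * B) (Suc (Suc i)) = M * (- Polynomial.coeff A (Suc (Suc i)))"
      by (simp add: of_int_poly)
    from dvdI[OF this] show ?thesis by (simp only: coeff_ff_mult)
  qed
  have "\<forall>i. i + k > degree B \<longrightarrow> M dvd Polynomial.coeff B i" for k
  proof (induction k)
    case 0 then show ?case by (simp add: coeff_eq_0)
  next
    case (Suc k)
    show ?case
    proof (intro allI impI)
      fix i assume "i + Suc k > degree B"
      then have "Suc i + k > degree B" "Suc (Suc i) + k > degree B" by auto
      then have "M dvd Polynomial.coeff B (Suc i)" "M dvd Polynomial.coeff B (Suc (Suc i))" using Suc by auto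
      note d = this
      define E where "E = Polynomial.coeff B i - 2 * x * Polynomial.coeff B (Suc i) + Polynomial.coeff B (Suc (Suc i))"
      have eq: "Polynomial.coeff B i = E + 2 * x * Polynomial.coeff B (Suc i) - Polynomial.coeff B (Suc (Suc i))"
        unfolding E_def by simp
      have "M dvd E" using hi[of i] unfolding E_def .
      then have "M dvd E + 2 * x * Polynomial.coeff B (Suc i) - Polynomial.coeff B (Suc (Suc i))"
        using d by (intro dvd_diff dvd_add dvd_mult) auto
      then show "M dvd Polynomial.coeff B i" by (simp only: eq)
    qed
  qed
  then have "M dvd Polynomial.coeff B 0" using spec[of _ 0] by (metis add_0 lessI)
  moreover have "c = M * Polynomial.coeff A 0 + Polynomial.coeff B 0"
  proof -
    have "Polynomial.coeff (of_int c :: int poly) 0 = Polynomial.coeff (of_int M * A + ff x * B) 0" using e by simp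
    then show ?thesis by (simp add: of_int_poly coeff_ff_mult)
  qed
  ultimately show ?thesis by simp
qed


definition tp :: "int \<Rightarrow> int poly" where "tp x = of_int (2*x) - tt"

lemma cg_to0: "cg x M P Q \<Longrightarrow> cg x M (P - Q) 0"
  unfolding cg_def by simp

lemma cg_from0: "cg x M (P - Q) 0 \<Longrightarrow> cg x M P Q"
  unfolding cg_def by simp

lemma cg_zero: "cg x 0 P Q \<Longrightarrow> cg x M P Q"
  by (rule cg_dvd[of M 0]) auto

lemma tt_sum: "cg x M (tt + tp x) (of_int (2*x))"
  unfolding tp_def by simp

lemma tt_prod: "cg x M (tt * tp x) 1"
proof -
  have "tt * tp x - 1 = of_int M * 0 + ff x * (-1)"
    unfolding tp_def ff_def by (simp add: algebra_simps power2_eq_square)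
  then show ?thesis unfolding cg_def by blast
qed

lemma cheb_cg:
  assumes s: "cg x M (u + u') (of_int (2*y))" and pr: "cg x M (u*u') 1"
  shows "cg x M (u^m + u'^m) (of_int (2 * cheb m y))"
proof (induction m rule: less_induct)
  case (less m)
  show ?case
  proof (cases m)
    case 0 then show ?thesis by simp
  next
    case (Suc m1)
    show ?thesis
    proof (cases m1)
      case 0 then show ?thesis using Suc s by simp
    next
      case (Suc d)
      have m: "m = Suc (Suc d)" using Suc \<open>m = Suc m1\<close> by simp
      have IH1: "cg x M (u^(Suc d) + u'^(Suc d)) (of_int (2 * cheb (Suc d) y))" by (rule less.IH) (simp add: m)
      have IH0: "cg x M (u^d + u'^d) (of_int (2 * cheb d y))" by (rule less.IH) (simp add: m)
      have id: "u^m + u'^m = (u + u') * (u^(Suc d) + u'^(Suc d)) - (u*u') * (u^d + u'^d)"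
        unfolding m by (simp add: algebra_simps)
      have "cg x M ((u + u') * (u^(Suc d) + u'^(Suc d)) - (u*u') * (u^d + u'^d))
          (of_int (2*y) * of_int (2 * cheb (Suc d) y) - 1 * of_int (2 * cheb d y))"
        by (intro cg_diff cg_mult s pr IH1 IH0)
      moreover have "(of_int (2*y) * of_int (2 * cheb (Suc d) y) - 1 * of_int (2 * cheb d y) :: int poly)
          = of_int (2 * cheb m y)"
        unfolding m by (simp add: algebra_simps)
      ultimately show ?thesis using id by simp
    qed
  qed
qed

lemma cheb_tt: "cg x M (tt^m + tp x^m) (of_int (2 * cheb m x))"
  by (rule cheb_cg[OF tt_sum tt_prod])

lemma cheb_comp: "cheb a (cheb b x) = cheb (a*b) x"
proof -
  have s: "cg x 0 (tt^b + tp x^b) (of_int (2 * cheb b x))" by (rule cheb_tt)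
  have pr: "cg x 0 (tt^b * tp x^b) 1"
    using cg_power[OF tt_prod[of x 0], of b] by (simp add: power_mult_distrib)
  have "cg x 0 ((tt^b)^a + (tp x^b)^a) (of_int (2 * cheb a (cheb b x)))"
    by (rule cheb_cg[OF s pr])
  moreover have "(tt^b)^a + (tp x^b)^a = tt^(a*b) + tp x^(a*b)"
    by (metis mult.commute power_mult)
  ultimately have "cg x 0 (of_int (2 * cheb a (cheb b x))) (of_int (2 * cheb (a*b) x))"
    using cheb_tt[of x 0 "a*b"] by (metis cg_sym cg_trans)
  then have "cg x 0 (of_int (2 * cheb a (cheb b x) - 2 * cheb (a*b) x)) 0"
    using cg_to0 by (metis of_int_diff)
  then have "(0::int) dvd (2 * cheb a (cheb b x) - 2 * cheb (a*b) x)" by (rule cg_const)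
  then show ?thesis by simp
qed

lemma funpow_cheb: "(cheb n ^^ N) y = cheb (n^N) y"
  by (induction N) (simp_all add: cheb_comp mult.commute)


lemma frob3:
  fixes a b c :: "int poly" and p :: int
  assumes "prime p"
  shows "cg x p ((a+b+c)^nat p) (a^nat p + b^nat p + c^nat p)"
proof -
  have q: "prime (nat p)" using assms by simp
  have qp: "(of_nat (nat p) :: int poly) = of_int p"
    using prime_gt_0_int[OF assms] by simp
  obtain C1 where C1: "(a+b+c)^nat p = (a+b)^nat p + c^nat p + of_nat (nat p) * C1"
    using frob2[OF q] by blast
  obtain C2 where C2: "(a+b)^nat p = a^nat p + b^nat p + of_nat (nat p) * C2"
    using frob2[OF q] by blast
  have "(a+b+c)^nat p - (a^nat p + b^nat p + c^nat p) = of_int p * (C1 + C2) + ff x * 0"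
    using C1 C2 qp by (simp add: algebra_simps)
  then show ?thesis unfolding cg_def by blast
qed

lemma step_p:
  fixes p x :: int
  assumes pr: "prime p" and p3: "p > 3"
  shows "cg x p (tt^((nat p - 1)*(nat p + 1)*nat p)) 1"
proof -
  define q where "q = nat p"
  have qpos: "q > 0" using p3 unfolding q_def by simp
  have qp: "(of_nat q :: int poly) = of_int p"
    using p3 unfolding q_def by simp
  define s where "s = tt^q"
  have f0: "cg x p (ff x ^ q) 0"
  proof -
    have "ff x ^ q = ff x * ff x ^ (q - 1)" using qpos by (cases q) simp_all
    moreover have "cg x p (ff x * ff x ^ (q - 1)) (0 * ff x ^ (q - 1))"
      by (intro cg_mult cg_ff cg_refl)
    ultimately show ?thesis by simp
  qed
  have ffe: "ff x = tt^2 + (- of_int (2*x)) * tt + 1" by (simp add: ff_def)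
  have A: "cg x p ((tt^2 + (- of_int (2*x)) * tt + 1)^q) ((tt^2)^q + ((- of_int (2*x)) * tt)^q + 1^q)"
    using frob3[OF pr, of x "tt^2" "(- of_int (2*x)) * tt" 1] unfolding q_def .
  have B: "cg x p ((tt^2 + (- of_int (2*x)) * tt + 1)^q) 0" using f0 ffe by simp
  have C: "cg x p ((tt^2)^q + ((- of_int (2*x)) * tt)^q + 1^q) 0"
    by (rule cg_trans[OF cg_sym[OF A] B])
  have D1: "(tt^2)^q = s^2" unfolding s_def power_mult[symmetric] by (simp add: mult.commute)
  have D2: "((- of_int (2*x)) * tt)^q = of_int ((-(2*x))^q) * s"
    unfolding s_def power_mult_distrib by simp
  have D3: "cg x p (of_int ((-(2*x))^q) * s) (of_int (-(2*x)) * s)"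
    by (intro cg_mult cg_refl cg_int) (use fermat_int[OF pr] p3 in \<open>simp add: q_def\<close>)
  have D4: "cg x p (s^2 + of_int ((-(2*x))^q) * s + 1) (s^2 + of_int (-(2*x)) * s + 1)"
    by (intro cg_add cg_refl D3)
  have hs: "cg x p (s^2 + of_int (-(2*x)) * s + 1) 0"
    using cg_trans[OF cg_sym[OF D4]] C D1 D2 by simp
  have E1: "(s - tt) * (s - tp x) = s^2 + of_int (-(2*x)) * s + tt * tp x"
    unfolding tp_def by (simp add: algebra_simps power2_eq_square)
  have E2: "cg x p (s^2 + of_int (-(2*x)) * s + tt * tp x) (s^2 + of_int (-(2*x)) * s + 1)"
    by (intro cg_add cg_refl tt_prod)
  have h0: "cg x p ((s - tt) * (s - tp x)) 0" unfolding E1 by (rule cg_trans[OF E2 hs])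
  define P1 where "P1 = tt^(q-1) - 1"
  define P2 where "P2 = tt^(q+1) - 1"
  have tq: "tt^q = tt * tt^(q-1)" using qpos by (cases q) simp_all
  have e1: "tp x * (s - tt) = (tt * tp x) * P1" unfolding P1_def s_def tq by (simp add: algebra_simps)
  have e2: "tt * (s - tp x) = tt^(q+1) - tt * tp x" unfolding s_def by (simp add: algebra_simps)
  have c1: "cg x p (tp x * (s - tt)) P1"
    unfolding e1 using cg_mult[OF tt_prod cg_refl[of x p P1]] by simp
  have c2: "cg x p (tt * (s - tp x)) P2"
    unfolding e2 P2_def by (intro cg_diff cg_refl tt_prod)
  have F1: "cg x p ((tp x * (s - tt)) * (tt * (s - tp x))) (P1 * P2)" by (rule cg_mult[OF c1 c2])
  have F2: "(tp x * (s - tt)) * (tt * (s - tp x)) = (tp x * tt) * ((s - tt) * (s - tp x))"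
    by (simp add: algebra_simps)
  have F3: "cg x p ((tp x * tt) * ((s - tt) * (s - tp x))) 0"
    using cg_mult_left[OF h0, of "tp x * tt"] by simp
  have h12: "cg x p (P1 * P2) 0"
    using cg_trans[OF cg_sym[OF F1]] F3 F2 by simp
  define v where "v = tt^((q-1)*(q+1)) - 1"
  have al: "v = P1 * (\<Sum>i<q+1. (tt^(q-1))^i)"
    using power_diff_1_eq[of "tt^(q-1)" "q+1"] unfolding v_def P1_def power_mult[symmetric] .
  have be: "v = P2 * (\<Sum>i<q-1. (tt^(q+1))^i)"
    using power_diff_1_eq[of "tt^(q+1)" "q-1"] unfolding v_def P2_def power_mult[symmetric]
    by (simp add: mult.commute)
  define al' where "al' = (\<Sum>i<q+1. (tt^(q-1))^i)"
  define be' where "be' = (\<Sum>i<q-1. (tt^(q+1))^i)"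
  have "v * v = (P1 * al') * (P2 * be')" using arg_cong2[OF al be, of "(*)"] unfolding al'_def be'_def .
  then have "v^2 = (P1 * P2) * (al' * be')" by (simp add: power2_eq_square algebra_simps)
  then have hv: "cg x p (v^2) 0" using cg_mult[OF h12 cg_refl[of x p "al'*be'"]] by simp
  obtain g where g: "(1+v)^q = 1 + of_nat q * v + v^2 * g" using binom_sq by blast
  have "cg x p (1 + of_nat q * v + v^2 * g) (1 + 0 + 0 * g)"
    unfolding qp by (intro cg_add cg_refl cg_mult cg_Mmult hv)
  moreover have "1 + v = tt^((q-1)*(q+1))" unfolding v_def by simp
  ultimately have "cg x p ((tt^((q-1)*(q+1)))^q) 1" using g by simp
  then show ?thesis unfolding q_def by (simp add: power_mult)
qed

lemma lift:
  fixes p x :: int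
  assumes p0: "p \<ge> 0" and i: "i \<ge> 1" and h: "cg x (p^i) P 1"
  shows "cg x (p^Suc i) (P^nat p) 1"
proof -
  define d where "d = P - 1"
  have hd: "cg x (p^i) d 0" using cg_to0[OF h] unfolding d_def .
  have qp: "(of_nat (nat p) :: int poly) = of_int p" using p0 by simp
  obtain g where g: "(1+d)^nat p = 1 + of_nat (nat p) * d + d^2 * g" using binom_sq by blast
  have a1: "cg x (p^Suc i) (of_nat (nat p) * d) 0"
    using cg_mult0[OF cg_Mmult[of x p 1] hd] qp by simp
  have cd: "cg x (p^i * p^i) (d * d) 0" by (rule cg_mult0[OF hd hd])
  have dv: "p^Suc i dvd p^i * p^i"
    using i le_imp_power_dvd[of "Suc i" "i + i" p] by (simp add: power_add)
  have "cg x (p^Suc i) (d * d) 0" by (rule cg_dvd[OF dv cd])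
  then have d2: "cg x (p^Suc i) (d^2) 0" by (simp add: power2_eq_square)
  have a2: "cg x (p^Suc i) (d^2 * g) 0" using cg_mult[OF d2 cg_refl[of x "p^Suc i" g]] by simp
  have "cg x (p^Suc i) (1 + of_nat (nat p) * d + d^2 * g) (1 + 0 + 0)"
    by (intro cg_add cg_refl a1 a2)
  then show ?thesis using g unfolding d_def by simp
qed


lemma tt_pow:
  fixes p x :: int
  assumes pr: "prime p" and p3: "p > 3"
  shows "cg x (p^Suc i) (tt^((nat p - 1)*(nat p + 1)*nat p * nat p ^ i)) 1"
proof (induction i)
  case 0 then show ?case using step_p[OF pr p3] by simp
next
  case (Suc i)
  have "cg x (p^Suc (Suc i)) ((tt^((nat p - 1)*(nat p + 1)*nat p * nat p ^ i))^nat p) 1"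
    by (rule lift[OF _ _ Suc]) (use p3 in auto)
  moreover have "(tt^((nat p - 1)*(nat p + 1)*nat p * nat p ^ i))^nat p
      = tt^((nat p - 1)*(nat p + 1)*nat p * nat p ^ Suc i)"
    unfolding power_mult[symmetric] by (simp add: algebra_simps)
  ultimately show ?case by simp
qed

lemma period:
  fixes p x :: int
  assumes pr: "prime p" and p3: "p > 3" and j: "j \<ge> 1"
  defines "E \<equiv> (nat p - 1)*(nat p + 1)*nat p * nat p ^ (j - 1)"
  shows "[cheb (m + E) x = cheb m x] (mod p^j)"
proof -
  have hE: "cg x (p^j) (tt^E) 1" using tt_pow[OF pr p3, of x "j - 1"] j unfolding E_def by simp
  have hp: "cg x (p^j) (tt^E * tp x^E) 1"
    using cg_power[OF tt_prod[of x "p^j"], of E] by (simp add: power_mult_distrib)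
  have "cg x (p^j) (1 * tp x^E) (tt^E * tp x^E)"
    by (intro cg_mult cg_refl cg_sym[OF hE])
  then have hE': "cg x (p^j) (tp x^E) 1" using cg_trans[OF _ hp] by simp
  have "cg x (p^j) (tt^m * tt^E + tp x^m * tp x^E) (tt^m * 1 + tp x^m * 1)"
    by (intro cg_add cg_mult cg_refl hE hE')
  then have a: "cg x (p^j) (tt^(m+E) + tp x^(m+E)) (tt^m + tp x^m)" by (simp add: power_add)
  have "cg x (p^j) (of_int (2 * cheb (m+E) x)) (of_int (2 * cheb m x))"
    using cg_trans[OF cg_trans[OF cg_sym[OF cheb_tt] a] cheb_tt] .
  then have "cg x (p^j) (of_int (2 * cheb (m+E) x - 2 * cheb m x)) 0"
    using cg_to0 by (metis of_int_diff)
  then have A: "p^j dvd (2 * cheb (m+E) x - 2 * cheb m x)" by (rule cg_const)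
  have eq: "2 * cheb (m+E) x - 2 * cheb m x = 2 * (cheb (m+E) x - cheb m x)" by simp
  have B: "p^j dvd 2 * (cheb (m+E) x - cheb m x)" using A unfolding eq .
  have op: "odd p" using prime_odd_int[OF pr] p3 by simp
  have cop: "coprime (p^j) 2" using op by simp
  have "p^j dvd (cheb (m+E) x - cheb m x)" by (rule iffD1[OF coprime_dvd_mult_right_iff[OF cop] B])
  then show ?thesis unfolding cong_iff_dvd_diff .
qed

lemma period_mult:
  fixes p x :: int
  assumes pr: "prime p" and p3: "p > 3" and j: "j \<ge> 1"
  defines "E \<equiv> (nat p - 1)*(nat p + 1)*nat p * nat p ^ (j - 1)"
  shows "[cheb (r + E * k) x = cheb r x] (mod p^j)"
proof (induction k)
  case 0 then show ?case by simp
next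
  case (Suc k)
  have "[cheb ((r + E * k) + E) x = cheb (r + E * k) x] (mod p^j)"
    using period[OF pr p3 j] unfolding E_def .
  note calc = this
  have eq: "r + E * Suc k = (r + E * k) + E" by simp
  have "[cheb (r + E * Suc k) x = cheb (r + E * k) x] (mod p^j)" unfolding eq by (rule calc)
  from cong_trans[OF this Suc.IH] show ?case .
qed

lemma exists_period:
  fixes p x :: int and n :: nat
  assumes pr: "prime p" and p3: "p > 3" and j: "j \<ge> 1"
    and g1: "gcd (int n) p = 1" and g2: "gcd (int n) (p^2 - 1) = 1"
  shows "\<exists>N>0. [(cheb n ^^ N) x = x] (mod p^j)"
proof -
  define q where "q = nat p"
  define E where "E = (q - 1)*(q + 1)*q * q ^ (j - 1)"
  have q3: "q > 3" using p3 unfolding q_def by simp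
  have Epos: "E > 1"
  proof -
    have a: "(q - 1)*(q + 1) > 1" using q3 by (simp add: less_1_mult)
    have b: "q * q^(j-1) \<ge> 1" using q3 by (simp add: Suc_leI)
    have "E = ((q - 1)*(q + 1)) * (q * q^(j-1))" unfolding E_def by (simp add: mult.assoc)
    also have "\<dots> \<ge> ((q - 1)*(q + 1)) * 1" using b by (intro mult_le_mono2)
    finally show ?thesis using a by simp
  qed
  have cq: "coprime n q"
  proof -
    have "coprime (int n) p" using g1 by (simp add: coprime_iff_gcd_eq_1)
    then have "coprime (int n) (int q)" using p3 unfolding q_def by simp
    then show ?thesis by simp
  qed
  have cq2: "coprime n ((q - 1)*(q + 1))"
  proof -
    have "int ((q - 1)*(q + 1)) = p^2 - 1"
      using p3 unfolding q_def by (simp add: of_nat_diff power2_eq_square algebra_simps)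
    moreover have "coprime (int n) (p^2 - 1)" using g2 by (simp add: coprime_iff_gcd_eq_1)
    ultimately have "coprime (int n) (int ((q - 1)*(q + 1)))" by simp
    then show ?thesis by (simp only: coprime_int_iff)
  qed
  have cE: "coprime n E" unfolding E_def using cq cq2 by simp
  have eu: "[n ^ totient E = 1] (mod E)" by (rule euler_theorem[OF cE])
  then have "n ^ totient E mod E = 1" using Epos by (simp add: cong_def)
  then have dec: "n ^ totient E = 1 + E * (n ^ totient E div E)"
    using mult_div_mod_eq[of E "n ^ totient E"] by linarith
  have "[cheb (1 + E * (n ^ totient E div E)) x = cheb 1 x] (mod p^j)"
    using period_mult[OF pr p3 j] unfolding E_def q_def .
  then have "[(cheb n ^^ totient E) x = x] (mod p^j)"
    unfolding funpow_cheb using dec by simp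
  moreover have "totient E > 0" using Epos by simp
  ultimately show ?thesis by blast
qed

theorem lemma10:
  fixes p :: int and n w k :: nat and x :: int
  assumes "prime p" and "p > 3" and "n > 1"
    and "gcd (int n) p = 1" and "gcd (int n) (p^2 - 1) = 1"
    and "w > 0" and "k > 0"
    and "2 \<le> x" and "x \<le> p^k - 1"
    and "finite {t::nat. [(cheb n ^^ least_period n (p^w) x) x = x] (mod p^t)}"
    and "k > Max {t::nat. [(cheb n ^^ least_period n (p^w) x) x = x] (mod p^t)}"
  shows "least_period n (p^k) x > least_period n (p^w) x"
proof -
  define N where "N = least_period n (p^w) x"
  define L where "L = least_period n (p^k) x"
  define S where "S = {t::nat. [(cheb n ^^ N) x = x] (mod p^t)}"
  have fin: "finite S" and kM: "k > Max S" using assms(10,11) unfolding S_def N_def by auto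
  have exw: "\<exists>N>0. [(cheb n ^^ N) x = x] (mod p^w)"
    by (rule exists_period) (use assms in auto)
  have exk: "\<exists>N>0. [(cheb n ^^ N) x = x] (mod p^k)"
    by (rule exists_period) (use assms in auto)
  have PN: "N > 0 \<and> [(cheb n ^^ N) x = x] (mod p^w)"
    unfolding N_def least_period_def by (rule LeastI_ex) (use exw in blast)
  have PL: "L > 0 \<and> [(cheb n ^^ L) x = x] (mod p^k)"
    unfolding L_def least_period_def by (rule LeastI_ex) (use exk in blast)
  have "w \<in> S" using PN unfolding S_def by simp
  then have "w \<le> Max S" using fin by simp
  then have wk: "w \<le> k" using kM by simp
  have "[(cheb n ^^ L) x = x] (mod p^w)"
    using PL cong_dvd_modulus le_imp_power_dvd[OF wk] by blast
  then have "N \<le> L" unfolding N_def least_period_def using PL by (intro Least_le) simp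
  moreover have "L \<noteq> N"
  proof
    assume "L = N"
    then have "k \<in> S" using PL unfolding S_def by simp
    then have "k \<le> Max S" using fin by simp
    then show False using kM by simp
  qed
  ultimately show ?thesis unfolding N_def L_def by simp
qed

end
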